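(* A ranking method is feasible and regret-free if and only if it is faithful, consistent and efficient.
   Context: Let $\mathcal{X}$ be a finite set of alternatives and let the chair's preference $\succ$ be a fixed ranking on $\mathcal{X}$. A proto-ranking is an irreflexive transitive relation; a ranking is a total proto-ranking; a tournament is a total asymmetric relation on $\mathcal{X}$. Interaction: given a tournament $\mathrel{W}$, start from $R_0=\varnothing$; in each period with $R_{t-1}$ not total the chair offers a pair $\{x,y\}$ unranked by $R_{t-1}$, the winner is $x$ if $x\mathrel{W}y$ and $y$ otherwise, and $R_t$ is the transitive closure of $R_{t-1}\cup\{(\text{winner},\text{loser})\}$; stop when $R_t$ is total. A strategy assigns to each non-terminal history a pair unranked at it; its outcome under $\mathrel{W}$ is the final ranking. A ranking is $\mathrel{W}$-feasible if it is the outcome under $\mathrel{W}$ of some strategy; $R$ is more aligned with $\succ$ than $R'$ if for all $x\succ y$, $xR'y$ implies $xRy$; a ranking is $\mathrel{W}$-unimprovable if no other $\mathrel{W}$-feasible ranking is more aligned with $\succ$; a ranking $R$ is $\mathrel{W}$-efficient if $x\succ y$ and $x\mathrel{W}y$ imply $xRy$. A ranking method is a map $\rho$ assigning a ranking to each tournament. It is feasible if some strategy has outcome $\rho(\mathrel{W})$ under every tournament $\mathrel{W}$; regret-free if $\rho(\mathrel{W})$ is $\mathrel{W}$-unimprovable for every $\mathrel{W}$; efficient if $\rho(\mathrel{W})$ is $\mathrel{W}$-efficient for every $\mathrel{W}$. A ranking $R$ is more aligned with a tournament $\mathrel{W}$ than $R'$ if for all $x\mathrel{W}y$, $xR'y$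 implies $xRy$. $\rho$ is faithful if for every $\mathrel{W}$ no ranking $R\ne\rho(\mathrel{W})$ is more aligned with $\mathrel{W}$ than $\rho(\mathrel{W})$. $\rho$ is consistent if whenever $\rho(\mathrel{W})\ne\rho(\mathrel{W}')$ there exist $x,y$ with $x\mathrel{W}y$ and $y\mathrel{W}'x$ such that for every tournament $\mathrel{W}''\supseteq\mathrel{W}\cap\mathrel{W}'$: $x\,\rho(\mathrel{W}'')\,y$ iff $x\mathrel{W}''y$. *)

theory Defs
  imports Main
begin

definition total_rel :: "'a rel \<Rightarrow> bool" where
  "total_rel R \<longleftrightarrow> (\<forall>x y. x \<noteq> y \<longrightarrow> (x, y) \<in> R \<or> (y, x) \<in> R)"

definition proto_ranking :: "'a rel \<Rightarrow> bool" where
  "proto_ranking R \<longleftrightarrow> irrefl R \<and> trans R"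

definition ranking :: "'a rel \<Rightarrow> bool" where
  "ranking R \<longleftrightarrow> proto_ranking R \<and> total_rel R"

definition tournament :: "'a rel \<Rightarrow> bool" where
  "tournament W \<longleftrightarrow> total_rel W \<and> asym W"

(* A history is the list of (winner, loser) pairs of the periods played so far;
   its ranking is the transitive closure of these pairs. *)
definition hist_rel :: "('a \<times> 'a) list \<Rightarrow> 'a rel" where
  "hist_rel h = (set h)\<^sup>+"

definition unranked :: "'a rel \<Rightarrow> 'a \<times> 'a \<Rightarrow> bool" where
  "unranked R p \<longleftrightarrow> fst p \<noteq> snd p \<and> p \<notin> R \<and> (snd p, fst p) \<notin> R"

(* A strategy offers, at every non-terminal history, a pair {x,y} (given as (x,y))
   that is unranked at that history. *)
definition strategy :: "(('a \<times> 'a) list \<Rightarrow> 'a \<times> 'a) \<Rightarrow> bool" where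
  "strategy \<sigma> \<longleftrightarrow> (\<forall>h. \<not> total_rel (hist_rel h) \<longrightarrow> unranked (hist_rel h) (\<sigma> h))"

definition winner_loser :: "'a rel \<Rightarrow> 'a \<times> 'a \<Rightarrow> 'a \<times> 'a" where
  "winner_loser W p = (if p \<in> W then p else (snd p, fst p))"

definition step :: "(('a \<times> 'a) list \<Rightarrow> 'a \<times> 'a) \<Rightarrow> 'a rel \<Rightarrow> ('a \<times> 'a) list \<Rightarrow> ('a \<times> 'a) list" where
  "step \<sigma> W h = (if total_rel (hist_rel h) then h else h @ [winner_loser W (\<sigma> h)])"

(* Each period ranks at least one new pair, so after card UNIV ^ 2 periods the
   interaction has stopped; the outcome is the final ranking. *)
definition outcome :: "(('a::finite \<times> 'a) list \<Rightarrow> 'a \<times> 'a) \<Rightarrow> 'a rel \<Rightarrow> 'a rel" where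
  "outcome \<sigma> W = hist_rel ((step \<sigma> W ^^ (card (UNIV :: 'a set) ^ 2)) [])"

definition W_feasible :: "'a::finite rel \<Rightarrow> 'a rel \<Rightarrow> bool" where
  "W_feasible W R \<longleftrightarrow> ranking R \<and> (\<exists>\<sigma>. strategy \<sigma> \<and> outcome \<sigma> W = R)"

definition more_aligned :: "'a rel \<Rightarrow> 'a rel \<Rightarrow> 'a rel \<Rightarrow> bool" where
  "more_aligned Q R R' \<longleftrightarrow> (\<forall>x y. (x, y) \<in> Q \<longrightarrow> (x, y) \<in> R' \<longrightarrow> (x, y) \<in> R)"

definition W_unimprovable :: "'a rel \<Rightarrow> 'a::finite rel \<Rightarrow> 'a rel \<Rightarrow> bool" where
  "W_unimprovable P W R \<longleftrightarrow> ranking R \<and>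
     (\<forall>R'. W_feasible W R' \<and> R' \<noteq> R \<longrightarrow> \<not> more_aligned P R' R)"

definition W_efficient :: "'a rel \<Rightarrow> 'a rel \<Rightarrow> 'a rel \<Rightarrow> bool" where
  "W_efficient P W R \<longleftrightarrow> (\<forall>x y. (x, y) \<in> P \<longrightarrow> (x, y) \<in> W \<longrightarrow> (x, y) \<in> R)"

(* ranking methods: maps assigning a ranking to each tournament
   (values on non-tournaments are irrelevant) *)
definition ranking_method :: "('a rel \<Rightarrow> 'a rel) \<Rightarrow> bool" where
  "ranking_method \<rho> \<longleftrightarrow> (\<forall>W. tournament W \<longrightarrow> ranking (\<rho> W))"

definition feasible_method :: "('a::finite rel \<Rightarrow> 'a rel) \<Rightarrow> bool" where
  "feasible_method \<rho> \<longleftrightarrow> (\<exists>\<sigma>. strategy \<sigma> \<and> (\<forall>W. tournament W \<longrightarrow> outcome \<sigma> W = \<rho> W))"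

definition regret_free :: "'a rel \<Rightarrow> ('a::finite rel \<Rightarrow> 'a rel) \<Rightarrow> bool" where
  "regret_free P \<rho> \<longleftrightarrow> (\<forall>W. tournament W \<longrightarrow> W_unimprovable P W (\<rho> W))"

definition efficient_method :: "'a rel \<Rightarrow> ('a rel \<Rightarrow> 'a rel) \<Rightarrow> bool" where
  "efficient_method P \<rho> \<longleftrightarrow> (\<forall>W. tournament W \<longrightarrow> W_efficient P W (\<rho> W))"

definition faithful :: "('a rel \<Rightarrow> 'a rel) \<Rightarrow> bool" where
  "faithful \<rho> \<longleftrightarrow> (\<forall>W. tournament W \<longrightarrow>
     (\<forall>R. ranking R \<and> R \<noteq> \<rho> W \<longrightarrow> \<not> more_aligned W R (\<rho> W)))"

definition consistent :: "('a rel \<Rightarrow> 'a rel) \<Rightarrow> bool" where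
  "consistent \<rho> \<longleftrightarrow> (\<forall>W W'. tournament W \<and> tournament W' \<and> \<rho> W \<noteq> \<rho> W' \<longrightarrow>
     (\<exists>x y. (x, y) \<in> W \<and> (y, x) \<in> W' \<and>
        (\<forall>W''. tournament W'' \<and> W \<inter> W' \<subseteq> W'' \<longrightarrow>
           ((x, y) \<in> \<rho> W'' \<longleftrightarrow> (x, y) \<in> W''))))"

end

theory Submission
  imports Defs
begin

definition cover :: "'a rel \<Rightarrow> 'a rel" where
  "cover R = {(a,b). (a,b) \<in> R \<and> \<not> (\<exists>c. (a,c) \<in> R \<and> (c,b) \<in> R)}"

definition hs :: "(('a \<times> 'a) list \<Rightarrow> 'a \<times> 'a) \<Rightarrow> 'a rel \<Rightarrow> nat \<Rightarrow> ('a \<times> 'a) list" where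
  "hs \<sigma> W t = (step \<sigma> W ^^ t) []"

lemma hs_0[simp]: "hs \<sigma> W 0 = []" by (simp add: hs_def)
lemma hs_Suc: "hs \<sigma> W (Suc t) = step \<sigma> W (hs \<sigma> W t)" by (simp add: hs_def)

lemma outcome_hs: "outcome \<sigma> (W::'a::finite rel) = hist_rel (hs \<sigma> W (card (UNIV::'a::finite set) ^ 2))"
  by (simp add: outcome_def hs_def)

lemma ranking_irrefl: "ranking R \<Longrightarrow> (a,a) \<notin> R"
  by (auto simp: ranking_def proto_ranking_def irrefl_def)
lemma ranking_trans: "ranking R \<Longrightarrow> trans R"
  by (auto simp: ranking_def proto_ranking_def)
lemma ranking_asym: "ranking R \<Longrightarrow> (a,b) \<in> R \<Longrightarrow> (b,a) \<notin> R"
  using ranking_irrefl ranking_trans transD by fast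
lemma ranking_total: "ranking R \<Longrightarrow> a \<noteq> b \<Longrightarrow> (b,a) \<notin> R \<Longrightarrow> (a,b) \<in> R"
  by (auto simp: ranking_def total_rel_def)
lemma ranking_transD: "ranking R \<Longrightarrow> (a,b) \<in> R \<Longrightarrow> (b,c) \<in> R \<Longrightarrow> (a,c) \<in> R"
  by (meson ranking_trans transD)

lemma tour_asym: "tournament W \<Longrightarrow> (a,b) \<in> W \<Longrightarrow> (b,a) \<notin> W"
  unfolding tournament_def using asymD by metis
lemma tour_irrefl: "tournament W \<Longrightarrow> (a,a) \<notin> W"
  using tour_asym by metis
lemma tour_total: "tournament W \<Longrightarrow> a \<noteq> b \<Longrightarrow> (b,a) \<notin> W \<Longrightarrow> (a,b) \<in> W"
  by (auto simp: tournament_def total_rel_def)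

lemma total_sub_eq:
  assumes "total_rel S" "S \<subseteq> R" "ranking R" shows "S = R"
proof
  show "R \<subseteq> S"
  proof (rule subsetI)
    fix p assume p: "p \<in> R"
    obtain a b where ab: "p = (a,b)" by (cases p)
    have "a \<noteq> b" using p ab ranking_irrefl[OF assms(3)] by metis
    then have "(a,b) \<in> S \<or> (b,a) \<in> S" using assms(1) unfolding total_rel_def by metis
    moreover have "(b,a) \<notin> S" using assms(2) ranking_asym[OF assms(3)] p ab by auto
    ultimately show "p \<in> S" using ab by simp
  qed
qed (rule assms(2))

lemma ranking_sub_eq: "ranking S \<Longrightarrow> ranking R \<Longrightarrow> S \<subseteq> R \<Longrightarrow> S = R"
  using total_sub_eq ranking_def by blast

lemma cover_sub: "cover R \<subseteq> R" by (auto simp: cover_def)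

lemma between_cover:
  fixes R :: "'a::finite rel"
  assumes "ranking R"
  shows "card {c. (a,c) \<in> R \<and> (c,b) \<in> R} = n \<Longrightarrow> (a,b) \<in> R \<Longrightarrow> (a,b) \<in> (cover R)\<^sup>+"
proof (induction n arbitrary: a b rule: less_induct)
  case (less n)
  show ?case
  proof (cases "\<exists>c. (a,c) \<in> R \<and> (c,b) \<in> R")
    case False
    then have "(a,b) \<in> cover R" using less.prems by (auto simp: cover_def)
    then show ?thesis by blast
  next
    case True
    then obtain c where c: "(a,c) \<in> R" "(c,b) \<in> R" by blast
    have s1: "{d. (a,d) \<in> R \<and> (d,c) \<in> R} \<subset> {d. (a,d) \<in> R \<and> (d,b) \<in> R}"
    proof
      show "{d. (a,d) \<in> R \<and> (d,c) \<in> R} \<subseteq> {d. (a,d) \<in> R \<and> (d,b) \<in> R}"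
        using c(2) ranking_transD[OF assms] by blast
      have "c \<notin> {d. (a,d) \<in> R \<and> (d,c) \<in> R}" using ranking_irrefl[OF assms] by blast
      moreover have "c \<in> {d. (a,d) \<in> R \<and> (d,b) \<in> R}" using c by blast
      ultimately show "{d. (a,d) \<in> R \<and> (d,c) \<in> R} \<noteq> {d. (a,d) \<in> R \<and> (d,b) \<in> R}" by blast
    qed
    have s2: "{d. (c,d) \<in> R \<and> (d,b) \<in> R} \<subset> {d. (a,d) \<in> R \<and> (d,b) \<in> R}"
    proof
      show "{d. (c,d) \<in> R \<and> (d,b) \<in> R} \<subseteq> {d. (a,d) \<in> R \<and> (d,b) \<in> R}"
        using c(1) ranking_transD[OF assms] by blast
      have "c \<notin> {d. (c,d) \<in> R \<and> (d,b) \<in> R}" using ranking_irrefl[OF assms] by blast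
      moreover have "c \<in> {d. (a,d) \<in> R \<and> (d,b) \<in> R}" using c by blast
      ultimately show "{d. (c,d) \<in> R \<and> (d,b) \<in> R} \<noteq> {d. (a,d) \<in> R \<and> (d,b) \<in> R}" by blast
    qed
    have "card {d. (a,d) \<in> R \<and> (d,c) \<in> R} < n"
      using psubset_card_mono[OF _ s1] less.prems by simp
    then have 1: "(a,c) \<in> (cover R)\<^sup>+" using less.IH c by blast
    have "card {d. (c,d) \<in> R \<and> (d,b) \<in> R} < n"
      using psubset_card_mono[OF _ s2] less.prems by simp
    then have 2: "(c,b) \<in> (cover R)\<^sup>+" using less.IH c by blast
    show ?thesis using 1 2 by simp
  qed
qed

lemma ranking_cover_trancl:
  fixes R :: "'a::finite rel"
  assumes "ranking R" shows "R \<subseteq> (cover R)\<^sup>+"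
  using between_cover[OF assms] by auto

lemma cover_sub_trans:
  fixes R :: "'a::finite rel"
  assumes "ranking R" "cover R \<subseteq> S" "trans S" shows "R \<subseteq> S"
proof -
  have "(cover R)\<^sup>+ \<subseteq> S\<^sup>+" using assms(2) trancl_mono by blast
  then have "(cover R)\<^sup>+ \<subseteq> S" using trancl_id[OF assms(3)] by simp
  then show ?thesis using ranking_cover_trancl[OF assms(1)] by (rule order_trans[rotated])
qed


lemma wl_cases: "winner_loser W p = p \<or> winner_loser W p = (snd p, fst p)"
  by (simp add: winner_loser_def)

lemma wl_in: "tournament W \<Longrightarrow> fst p \<noteq> snd p \<Longrightarrow> winner_loser W p \<in> W"
  unfolding winner_loser_def using tour_total[of W "snd p" "fst p"] by (cases p) auto

lemma wl_notin_unranked: "unranked R p \<Longrightarrow> winner_loser W p \<notin> R"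
  unfolding unranked_def using wl_cases[of W p] by metis

lemma hist_rel_snoc: "hist_rel (h @ [q]) = (insert q (set h))\<^sup>+"
  by (simp add: hist_rel_def)

lemma set_sub_hist: "set h \<subseteq> hist_rel h"
  unfolding hist_rel_def by auto

lemma hist_mono: "set h \<subseteq> set h' \<Longrightarrow> hist_rel h \<subseteq> hist_rel h'"
  unfolding hist_rel_def by (rule trancl_mono_subset)

lemma step_cases: "step \<sigma> W h = h \<or> (\<not> total_rel (hist_rel h) \<and> step \<sigma> W h = h @ [winner_loser W (\<sigma> h)])"
  by (simp add: step_def)

lemma set_step: "set h \<subseteq> set (step \<sigma> W h)"
  by (auto simp add: step_def)

lemma hs_mono: "t \<le> t' \<Longrightarrow> set (hs \<sigma> W t) \<subseteq> set (hs \<sigma> W t')"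
proof (induction t' rule: nat_induct)
  case 0 then show ?case by simp
next
  case (Suc n)
  show ?case
  proof (cases "t = Suc n")
    case True then show ?thesis by simp
  next
    case False
    then have "t \<le> n" using Suc.prems by simp
    then have "set (hs \<sigma> W t) \<subseteq> set (hs \<sigma> W n)" using Suc.IH by simp
    also have "\<dots> \<subseteq> set (hs \<sigma> W (Suc n))" unfolding hs_Suc by (rule set_step)
    finally show ?thesis .
  qed
qed

lemma strategy_unranked: "strategy \<sigma> \<Longrightarrow> \<not> total_rel (hist_rel h) \<Longrightarrow> unranked (hist_rel h) (\<sigma> h)"
  by (simp add: strategy_def)

lemma set_hs_sub:
  assumes "strategy \<sigma>" "tournament W" shows "set (hs \<sigma> W t) \<subseteq> W"
proof (induction t)
  case 0 then show ?case by simp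
next
  case (Suc t)
  let ?h = "hs \<sigma> W t"
  show ?case
  proof (cases "total_rel (hist_rel ?h)")
    case True then show ?thesis using Suc by (simp add: hs_Suc step_def)
  next
    case False
    then have "unranked (hist_rel ?h) (\<sigma> ?h)" using assms(1) by (simp add: strategy_def)
    then have "fst (\<sigma> ?h) \<noteq> snd (\<sigma> ?h)" by (simp add: unranked_def)
    then have "winner_loser W (\<sigma> ?h) \<in> W" using wl_in assms(2) by metis
    then show ?thesis using Suc False by (simp add: hs_Suc step_def)
  qed
qed

lemma play_same:
  assumes "tournament W1" shows "set (hs \<sigma> W0 t) \<subseteq> W1 \<Longrightarrow> hs \<sigma> W1 t = hs \<sigma> W0 t"
proof (induction t)
  case 0 then show ?case by simp
next
  case (Suc t)
  have sub: "set (hs \<sigma> W0 t) \<subseteq> W1" using Suc.prems hs_mono[of t "Suc t" \<sigma> W0] by simp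
  then have eq: "hs \<sigma> W1 t = hs \<sigma> W0 t" using Suc.IH by simp
  let ?h = "hs \<sigma> W0 t"
  show ?case
  proof (cases "total_rel (hist_rel ?h)")
    case True then show ?thesis using eq by (simp add: hs_Suc step_def)
  next
    case False
    let ?p = "\<sigma> ?h"
    have in1: "winner_loser W0 ?p \<in> W1" using Suc.prems False by (simp add: hs_Suc step_def)
    have "winner_loser W1 ?p = winner_loser W0 ?p"
    proof (cases "?p \<in> W0")
      case True
      then have "?p \<in> W1" using in1 by (simp add: winner_loser_def)
      then show ?thesis using True by (simp add: winner_loser_def)
    next
      case F: False
      then have "(snd ?p, fst ?p) \<in> W1" using in1 by (simp add: winner_loser_def)
      then have "?p \<notin> W1" using tour_asym[OF assms] by (cases ?p) auto
      then show ?thesis using F by (simp add: winner_loser_def)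
    qed
    then show ?thesis using eq False by (simp add: hs_Suc step_def)
  qed
qed

lemma hs_total_or_card:
  fixes W :: "'a::finite rel"
  assumes "strategy \<sigma>"
  shows "total_rel (hist_rel (hs \<sigma> W t)) \<or> t \<le> card (hist_rel (hs \<sigma> W t))"
proof (induction t)
  case 0 then show ?case by simp
next
  case (Suc t)
  let ?h = "hs \<sigma> W t"
  show ?case
  proof (cases "total_rel (hist_rel ?h)")
    case True then show ?thesis by (simp add: hs_Suc step_def)
  next
    case False
    then have le: "t \<le> card (hist_rel ?h)" using Suc.IH by simp
    let ?q = "winner_loser W (\<sigma> ?h)"
    have un: "unranked (hist_rel ?h) (\<sigma> ?h)" using assms False by (simp add: strategy_def)
    have hn: "hs \<sigma> W (Suc t) = ?h @ [?q]" using False by (simp add: hs_Suc step_def)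
    have "hist_rel ?h \<subseteq> hist_rel (?h @ [?q])" by (rule hist_mono) auto
    moreover have "?q \<in> hist_rel (?h @ [?q])" using set_sub_hist[of "?h @ [?q]"] by simp
    moreover have "?q \<notin> hist_rel ?h" using wl_notin_unranked[OF un] .
    ultimately have "hist_rel ?h \<subset> hist_rel (?h @ [?q])" by blast
    then have "card (hist_rel ?h) < card (hist_rel (?h @ [?q]))"
      by (rule psubset_card_mono[OF finite])
    then show ?thesis using le hn by simp
  qed
qed

lemma outcome_total:
  fixes W :: "'a::finite rel"
  assumes "strategy \<sigma>"
  shows "total_rel (outcome \<sigma> W)"
proof (rule ccontr)
  let ?N = "card (UNIV::'a set) ^ 2"
  assume nt: "\<not> total_rel (outcome \<sigma> W)"
  then have "?N \<le> card (outcome \<sigma> W)"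
    using hs_total_or_card[OF assms, of W ?N] by (simp add: outcome_hs)
  moreover have "card (UNIV :: ('a \<times> 'a) set) = ?N" 
    using card_cartesian_product[of "UNIV::'a set" "UNIV::'a set"] by (simp add: power2_eq_square)
  ultimately have "card (UNIV :: ('a \<times> 'a) set) \<le> card (outcome \<sigma> W)" by simp
  then have "outcome \<sigma> W = UNIV" using card_subset_eq[OF finite subset_UNIV] card_mono[OF finite subset_UNIV, of "outcome \<sigma> W"] by (metis le_antisym)
  then show False using nt by (simp add: total_rel_def)
qed

lemma cover_hist: "cover (hist_rel h) \<subseteq> set h"
proof
  fix p assume p: "p \<in> cover (hist_rel h)"
  obtain a b where ab: "p = (a,b)" by (cases p)
  have ab_in: "(a,b) \<in> (set h)\<^sup>+" and nb: "\<not> (\<exists>c. (a,c) \<in> (set h)\<^sup>+ \<and> (c,b) \<in> (set h)\<^sup>+)"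
    using p ab unfolding cover_def hist_rel_def by auto
  from ab_in have "(a,b) \<in> set h \<or> (\<exists>c. (a,c) \<in> set h \<and> (c,b) \<in> (set h)\<^sup>+)"
    by (metis converse_tranclE)
  then show "p \<in> set h" using nb ab by auto
qed

lemma outcome_hist_mono:
  fixes W :: "'a::finite rel"
  assumes "t \<le> card (UNIV::'a set) ^ 2"
  shows "hist_rel (hs \<sigma> W t) \<subseteq> outcome \<sigma> W"
  unfolding outcome_hs by (rule hist_mono[OF hs_mono[OF assms]])


lemma trans_hist: "trans (hist_rel h)"
  unfolding hist_rel_def by simp

lemma achieve:
  fixes W :: "'a::finite rel"
  assumes st: "strategy \<sigma>" and R: "ranking R"
    and ok: "\<And>t. hist_rel (hs \<sigma> W t) \<subseteq> R \<Longrightarrow> \<not> total_rel (hist_rel (hs \<sigma> W t))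
               \<Longrightarrow> winner_loser W (\<sigma> (hs \<sigma> W t)) \<in> R"
  shows "outcome \<sigma> W = R"
proof -
  have inv: "hist_rel (hs \<sigma> W t) \<subseteq> R" for t
  proof (induction t)
    case 0 then show ?case by (simp add: hist_rel_def)
  next
    case (Suc t)
    let ?h = "hs \<sigma> W t"
    show ?case
    proof (cases "total_rel (hist_rel ?h)")
      case True then show ?thesis using Suc by (simp add: hs_Suc step_def)
    next
      case False
      let ?q = "winner_loser W (\<sigma> ?h)"
      have "?q \<in> R" using ok[OF Suc False] .
      moreover have "set ?h \<subseteq> R" using Suc set_sub_hist[of ?h] by blast
      ultimately have "insert ?q (set ?h) \<subseteq> R" by simp
      then have "(insert ?q (set ?h))\<^sup>+ \<subseteq> R\<^sup>+" by (rule trancl_mono_subset)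
      then have "(insert ?q (set ?h))\<^sup>+ \<subseteq> R" using trancl_id[OF ranking_trans[OF R]] by simp
      then show ?thesis using False by (simp add: hs_Suc step_def hist_rel_snoc)
    qed
  qed
  show ?thesis
    using total_sub_eq[OF outcome_total[OF st] _ R] inv unfolding outcome_hs by blast
qed

lemma exists_unranked: "\<not> total_rel S \<Longrightarrow> \<exists>p. unranked S p"
  unfolding total_rel_def unranked_def by auto

lemma exists_cover_unranked:
  fixes R :: "'a::finite rel"
  assumes R: "ranking R" and sub: "S \<subseteq> R" and tr: "trans S" and nt: "\<not> total_rel S"
  shows "\<exists>p\<in>cover R. unranked S p"
proof (rule ccontr)
  assume "\<not> (\<exists>p\<in>cover R. unranked S p)"
  then have "cover R \<subseteq> S"
  proof (intro subsetI)
    fix p assume no: "\<not> (\<exists>p\<in>cover R. unranked S p)" and p: "p \<in> cover R"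
    obtain a b where ab: "p = (a,b)" by (cases p)
    have abR: "(a,b) \<in> R" using p ab cover_sub by blast
    then have "a \<noteq> b" using ranking_irrefl[OF R] by metis
    moreover have "(b,a) \<notin> S" using abR sub ranking_asym[OF R] by blast
    ultimately show "p \<in> S" using no p ab unfolding unranked_def by auto
  qed
  then have "R \<subseteq> S" using cover_sub_trans[OF R _ tr] by simp
  then have "S = R" using sub by simp
  then show False using nt R by (simp add: ranking_def)
qed

lemma feasible_from_cover:
  fixes W :: "'a::finite rel"
  assumes W: "tournament W" and R: "ranking R" and cv: "cover R \<subseteq> W"
  shows "W_feasible W R"
proof -
  define \<sigma> :: "('a \<times> 'a) list \<Rightarrow> 'a \<times> 'a" where "\<sigma> = (\<lambda>h. if \<exists>p\<in>cover R. unranked (hist_rel h) p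
       then SOME p. p \<in> cover R \<and> unranked (hist_rel h) p
       else SOME p. unranked (hist_rel h) p)"
  have good: "\<sigma> h \<in> cover R \<and> unranked (hist_rel h) (\<sigma> h)" if "\<exists>p\<in>cover R. unranked (hist_rel h) p" for h
    using that unfolding \<sigma>_def by (simp add: Bex_def) (rule someI_ex, blast)
  have st: "strategy \<sigma>"
    unfolding strategy_def
  proof (intro allI impI)
    fix h :: "('a \<times> 'a) list" assume nt: "\<not> total_rel (hist_rel h)"
    show "unranked (hist_rel h) (\<sigma> h)"
    proof (cases "\<exists>p\<in>cover R. unranked (hist_rel h) p")
      case True then show ?thesis using good by blast
    next
      case False
      then have "\<sigma> h = (SOME p. unranked (hist_rel h) p)" unfolding \<sigma>_def by simp
      then show ?thesis using exists_unranked[OF nt] by (metis someI_ex)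
    qed
  qed
  have "outcome \<sigma> W = R"
  proof (rule achieve[OF st R])
    fix t
    assume sub: "hist_rel (hs \<sigma> W t) \<subseteq> R" and nt: "\<not> total_rel (hist_rel (hs \<sigma> W t))"
    have "\<exists>p\<in>cover R. unranked (hist_rel (hs \<sigma> W t)) p"
      using exists_cover_unranked[OF R sub trans_hist nt] .
    then have g: "\<sigma> (hs \<sigma> W t) \<in> cover R" using good by blast
    then have "\<sigma> (hs \<sigma> W t) \<in> W" using cv by blast
    then have "winner_loser W (\<sigma> (hs \<sigma> W t)) = \<sigma> (hs \<sigma> W t)" by (simp add: winner_loser_def)
    then show "winner_loser W (\<sigma> (hs \<sigma> W t)) \<in> R" using g cover_sub by (metis subsetD)
  qed
  then show ?thesis unfolding W_feasible_def using R st by blast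
qed

lemma outcome_cover:
  fixes W :: "'a::finite rel"
  assumes "strategy \<sigma>" "tournament W"
  shows "cover (outcome \<sigma> W) \<subseteq> W"
  unfolding outcome_hs using cover_hist set_hs_sub[OF assms] by (metis order_trans)

lemma feasible_cover:
  fixes W :: "'a::finite rel"
  assumes "W_feasible W R" "tournament W"
  shows "cover R \<subseteq> W"
  using assms outcome_cover unfolding W_feasible_def by metis

lemma cover_faithW:
  fixes R :: "'a::finite rel"
  assumes R: "ranking R" and cv: "cover R \<subseteq> W" and R': "ranking R'" and al: "more_aligned W R' R"
  shows "R' = R"
proof -
  have "cover R \<subseteq> R'"
    using al cv cover_sub[of R] unfolding more_aligned_def by auto
  then have "R \<subseteq> R'" using cover_sub_trans[OF R _ ranking_trans[OF R']] by simp
  then show ?thesis using ranking_sub_eq[OF R R'] by simp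
qed

lemma swap_ranking:
  assumes R: "ranking R" and uv: "(u,v) \<in> cover R"
  shows "ranking (insert (v,u) (R - {(u,v)}))"
proof -
  let ?R = "insert (v,u) (R - {(u,v)})"
  have uvR: "(u,v) \<in> R" and nb: "\<And>c. (u,c) \<in> R \<Longrightarrow> (c,v) \<in> R \<Longrightarrow> False"
    using uv unfolding cover_def by auto
  have neq: "u \<noteq> v" using uvR ranking_irrefl[OF R] by metis
  have irr: "irrefl ?R" using neq ranking_irrefl[OF R] unfolding irrefl_def by auto
  have tot: "total_rel ?R" using R neq unfolding ranking_def total_rel_def by auto
  have tr: "trans ?R"
  proof (rule transI)
    fix a b c assume ab: "(a,b) \<in> ?R" and bc: "(b,c) \<in> ?R"
    show "(a,c) \<in> ?R"
    proof (cases "(a,b) = (v,u)")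
      case True
      then have a: "a = v" "b = u" by auto
      show ?thesis
      proof (cases "(b,c) = (v,u)")
        case True then show ?thesis using a neq by auto
      next
        case False
        then have uc: "(u,c) \<in> R" "c \<noteq> v" using bc a by auto
        have "(c,v) \<notin> R" using nb uc by blast
        moreover have "v \<noteq> c" using uc by simp
        ultimately have "(v,c) \<in> R" using ranking_total[OF R] by metis
        then show ?thesis using a neq by auto
      qed
    next
      case F1: False
      then have abR: "(a,b) \<in> R" "(a,b) \<noteq> (u,v)" using ab by auto
      show ?thesis
      proof (cases "(b,c) = (v,u)")
        case True
        then have bc': "b = v" "c = u" by auto
        have "a \<noteq> u" using abR bc' by auto
        moreover have "(u,a) \<notin> R" using nb abR bc' by blast
        ultimately have "(a,u) \<in> R" using ranking_total[OF R] by metis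
        then show ?thesis using bc' neq by auto
      next
        case False
        then have bcR: "(b,c) \<in> R" "(b,c) \<noteq> (u,v)" using bc by auto
        have acR: "(a,c) \<in> R" using ranking_transD[OF R abR(1) bcR(1)] .
        have "(a,c) \<noteq> (u,v)"
        proof
          assume "(a,c) = (u,v)"
          then show False using nb abR(1) bcR(1) by blast
        qed
        then show ?thesis using acR by auto
      qed
    qed
  qed
  show ?thesis unfolding ranking_def proto_ranking_def using irr tot tr by simp
qed

lemma faithW_cover:
  fixes R :: "'a::finite rel"
  assumes R: "ranking R" and W: "tournament W"
    and fw: "\<And>R'. ranking R' \<Longrightarrow> R' \<noteq> R \<Longrightarrow> \<not> more_aligned W R' R"
  shows "cover R \<subseteq> W"
proof
  fix p assume p: "p \<in> cover R"
  obtain u v where uv: "p = (u,v)" by (cases p)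
  show "p \<in> W"
  proof (rule ccontr)
    assume nW: "p \<notin> W"
    let ?R = "insert (v,u) (R - {(u,v)})"
    have rk: "ranking ?R" using swap_ranking[OF R] p uv by simp
    have "(u,v) \<in> R" using p uv cover_sub by blast
    then have "(u,v) \<notin> ?R" using ranking_asym[OF R] by auto
    then have ne: "?R \<noteq> R" using \<open>(u,v) \<in> R\<close> by blast
    have "more_aligned W ?R R" using nW uv unfolding more_aligned_def by auto
    then show False using fw[OF rk ne] by simp
  qed
qed


definition lexl :: "nat \<times> nat \<times> nat \<Rightarrow> nat \<times> nat \<times> nat \<Rightarrow> bool" where
  "lexl a b \<longleftrightarrow> fst a < fst b \<or> (fst a = fst b \<and> (fst (snd a) < fst (snd b) \<or>
      (fst (snd a) = fst (snd b) \<and> snd (snd a) < snd (snd b))))"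

lemma lexl_trans: "lexl a b \<Longrightarrow> lexl b c \<Longrightarrow> lexl a c"
  unfolding lexl_def by auto

lemma lexl_irrefl: "\<not> lexl a a"
  unfolding lexl_def by auto

lemma lexl_total: "a \<noteq> b \<Longrightarrow> lexl a b \<or> lexl b a"
  unfolding lexl_def by (cases a; cases b) auto

lemma lexl_asym: "lexl a b \<Longrightarrow> \<not> lexl b a"
  unfolding lexl_def by auto

lemma ranking_of_key:
  assumes inj: "\<And>a b. k a = k b \<Longrightarrow> a = b"
  shows "ranking {(a,b). lexl (k a) (k b)}"
  unfolding ranking_def proto_ranking_def total_rel_def irrefl_def trans_def
  using lexl_irrefl lexl_trans lexl_total inj by blast

definition pos :: "'a rel \<Rightarrow> 'a \<Rightarrow> nat" where
  "pos R z = card {w. (w,z) \<in> R}"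

lemma pos_less:
  fixes R :: "'a::finite rel"
  assumes R: "ranking R" and ab: "(a,b) \<in> R"
  shows "pos R a < pos R b"
proof -
  have "{w. (w,a) \<in> R} \<subset> {w. (w,b) \<in> R}"
  proof
    show "{w. (w,a) \<in> R} \<subseteq> {w. (w,b) \<in> R}" using ranking_transD[OF R _ ab] by blast
    have "a \<notin> {w. (w,a) \<in> R}" using ranking_irrefl[OF R] by simp
    then show "{w. (w,a) \<in> R} \<noteq> {w. (w,b) \<in> R}" using ab by blast
  qed
  then show ?thesis unfolding pos_def by (rule psubset_card_mono[OF finite])
qed

lemma pos_iff:
  fixes R :: "'a::finite rel"
  assumes R: "ranking R"
  shows "(a,b) \<in> R \<longleftrightarrow> pos R a < pos R b"
proof
  assume "pos R a < pos R b"
  moreover have "a \<noteq> b" using calculation by auto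
  moreover have "(b,a) \<notin> R" using calculation pos_less[OF R, of b a] by auto
  ultimately show "(a,b) \<in> R" using ranking_total[OF R] by metis
qed (rule pos_less[OF R])

lemma pos_inj:
  fixes R :: "'a::finite rel"
  assumes R: "ranking R" and eq: "pos R a = pos R b"
  shows "a = b"
proof (rule ccontr)
  assume "a \<noteq> b"
  then have "(a,b) \<in> R \<or> (b,a) \<in> R" using ranking_total[OF R] by metis
  then show False using pos_less[OF R] eq by fastforce
qed

lemma improve:
  fixes R P :: "'a::finite rel"
  assumes R: "ranking R" and P: "ranking P" and yx: "(y,x) \<in> R" and xy: "(x,y) \<in> P"
  shows "\<exists>R''. ranking R'' \<and> cover R'' \<subseteq> insert (x,y) (R - {(y,x)}) \<and> R'' \<noteq> R
           \<and> more_aligned P R'' R"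
proof -
  define p where "p = pos R"
  have p_iff: "\<And>a b. (a,b) \<in> R \<longleftrightarrow> p a < p b" unfolding p_def using pos_iff[OF R] by blast
  have p_inj: "\<And>a b. p a = p b \<Longrightarrow> a = b" unfolding p_def using pos_inj[OF R] by blast
  define blk where "blk z \<longleftrightarrow> z = y \<or> z = x \<or> ((y,z) \<in> R \<and> (z,x) \<in> R)" for z
  define Dn where "Dn z \<longleftrightarrow> blk z \<and> z \<noteq> y \<and> (z,y) \<in> P" for z
  define key where "key z = (if blk z then (p y, if Dn z then 0 else 1, p z) else (p z, 0::nat, 0::nat))" for z
  define R'' where "R'' = {(a,b). lexl (key a) (key b)}"
  have pyx: "p y < p x" using yx p_iff by blast
  have blk_range: "p y \<le> p z \<and> p z \<le> p x" if "blk z" for z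
    using that pyx p_iff unfolding blk_def by fastforce
  have nblk_range: "p z < p y \<or> p x < p z" if "\<not> blk z" for z
  proof -
    have "z \<noteq> y" "z \<noteq> x" using that unfolding blk_def by auto
    then have "p z \<noteq> p y" "p z \<noteq> p x" using p_inj by metis+
    moreover have "\<not> (p y < p z \<and> p z < p x)" using that p_iff unfolding blk_def by blast
    ultimately show ?thesis by linarith
  qed
  have key_inj: "a = b" if "key a = key b" for a b
  proof (cases "blk a")
    case True
    show ?thesis
    proof (cases "blk b")
      case True
      then show ?thesis using \<open>blk a\<close> that p_inj unfolding key_def by (auto split: if_splits)
    next
      case False
      then have "p y = p b" using \<open>blk a\<close> that unfolding key_def by simp
      then have "b = y" using p_inj by metis
      then show ?thesis using False unfolding blk_def by simp
    qed
  next
    case False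
    show ?thesis
    proof (cases "blk b")
      case True
      then have "p y = p a" using False that unfolding key_def by simp
      then have "a = y" using p_inj by metis
      then show ?thesis using False unfolding blk_def by simp
    next
      case False
      then show ?thesis using \<open>\<not> blk a\<close> that p_inj unfolding key_def by auto
    qed
  qed
  have rk: "ranking R''" unfolding R''_def by (rule ranking_of_key) (rule key_inj)
  have R''_iff: "(a,b) \<in> R'' \<longleftrightarrow> lexl (key a) (key b)" for a b unfolding R''_def by simp
  have flip: "blk a \<and> blk b \<and> Dn b \<and> \<not> Dn a" if pab: "p a < p b" and kl: "lexl (key b) (key a)" for a b
  proof (cases "blk a")
    case ba: True
    show ?thesis
    proof (cases "blk b")
      case bb: True
      then show ?thesis using ba pab kl unfolding key_def lexl_def by (auto split: if_splits)
    next
      case bb: False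
      have "p b < p y \<or> p b = p y" using ba bb kl unfolding key_def lexl_def by (auto split: if_splits)
      moreover have "p b \<noteq> p y" using bb p_inj unfolding blk_def by metis
      ultimately show ?thesis using blk_range[OF ba] pab by linarith
    qed
  next
    case ba: False
    show ?thesis
    proof (cases "blk b")
      case bb: True
      have "p y < p a \<or> p y = p a" using ba bb kl unfolding key_def lexl_def by (auto split: if_splits)
      moreover have "p a \<noteq> p y" using ba p_inj unfolding blk_def by metis
      ultimately show ?thesis using blk_range[OF bb] nblk_range[OF ba] pab by linarith
    next
      case bb: False
      then show ?thesis using ba pab kl unfolding key_def lexl_def by auto
    qed
  qed
  have bx: "blk x" and bY: "blk y" unfolding blk_def by auto
  have xney: "x \<noteq> y" using yx ranking_irrefl[OF R] by metis
  have Dx: "Dn x" using bx xney xy unfolding Dn_def by simp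
  have nDy: "\<not> Dn y" unfolding Dn_def by simp
  have xyR'': "(x,y) \<in> R''" unfolding R''_iff key_def lexl_def using bx bY Dx nDy by simp
  have ne: "R'' \<noteq> R"
  proof
    assume "R'' = R"
    then show False using xyR'' yx ranking_asym[OF R] by metis
  qed
  have al: "more_aligned P R'' R"
    unfolding more_aligned_def
  proof (intro allI impI)
    fix a b assume abP: "(a,b) \<in> P" and abR: "(a,b) \<in> R"
    show "(a,b) \<in> R''"
    proof (rule ccontr)
      assume nab: "(a,b) \<notin> R''"
      have "a \<noteq> b" using abR ranking_irrefl[OF R] by metis
      then have "key a \<noteq> key b" using key_inj by metis
      then have kl: "lexl (key b) (key a)" using lexl_total nab R''_iff by metis
      have pab: "p a < p b" using abR p_iff by blast
      have fl: "blk a \<and> blk b \<and> Dn b \<and> \<not> Dn a" using flip[OF pab kl] .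
      then have by': "(b,y) \<in> P" "b \<noteq> y" unfolding Dn_def by auto
      show False
      proof (cases "a = y")
        case True
        then show False using by' abP ranking_asym[OF P] by metis
      next
        case False
        then have "(a,y) \<notin> P" using fl unfolding Dn_def by auto
        then have "(y,a) \<in> P" using ranking_total[OF P] False by metis
        then have "(b,a) \<in> P" using by'(1) ranking_transD[OF P] by metis
        then show False using abP ranking_asym[OF P] by metis
      qed
    qed
  qed
  have cv: "cover R'' \<subseteq> insert (x,y) (R - {(y,x)})"
  proof
    fix q assume q: "q \<in> cover R''"
    obtain a b where ab: "q = (a,b)" by (cases q)
    have abR'': "(a,b) \<in> R''" and nb: "\<And>c. (a,c) \<in> R'' \<Longrightarrow> (c,b) \<in> R'' \<Longrightarrow> False"
      using q ab unfolding cover_def by auto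
    show "q \<in> insert (x,y) (R - {(y,x)})"
    proof (cases "(a,b) \<in> R")
      case True
      have "(a,b) \<noteq> (y,x)" using abR'' xyR'' ranking_asym[OF rk] by metis
      then show ?thesis using True ab by simp
    next
      case False
      have "a \<noteq> b" using abR'' ranking_irrefl[OF rk] by metis
      then have "(b,a) \<in> R" using False ranking_total[OF R] by metis
      then have pba: "p b < p a" using p_iff by blast
      have kl: "lexl (key a) (key b)" using abR'' R''_iff by simp
      have fl: "blk b \<and> blk a \<and> Dn a \<and> \<not> Dn b" using flip[OF pba kl] .
      show ?thesis
      proof (cases "a = x")
        case False
        have "p a \<le> p x" using blk_range fl by blast
        moreover have "p a \<noteq> p x" using False p_inj by metis
        ultimately have "p a < p x" by simp
        then have "(a,x) \<in> R''" unfolding R''_iff key_def lexl_def using fl bx Dx by simp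
        moreover have "(x,b) \<in> R''" unfolding R''_iff key_def lexl_def using fl bx Dx by simp
        ultimately show ?thesis using nb by metis
      next
        case ax: True
        show ?thesis
        proof (cases "b = y")
          case True then show ?thesis using ax ab by simp
        next
          case False
          have "p y \<le> p b" using blk_range fl by blast
          moreover have "p b \<noteq> p y" using False p_inj by metis
          ultimately have "p y < p b" by simp
          then have "(y,b) \<in> R''" unfolding R''_iff key_def lexl_def using fl bY nDy by simp
          moreover have "(a,y) \<in> R''" using xyR'' ax by simp
          ultimately show ?thesis using nb by metis
        qed
      qed
    qed
  qed
  show ?thesis using rk cv ne al by blast
qed


lemma feas_faithful:
  fixes \<rho> :: "'a::finite rel \<Rightarrow> 'a rel"
  assumes rm: "ranking_method \<rho>" and fe: "feasible_method \<rho>"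
  shows "faithful \<rho>"
proof -
  obtain \<sigma> where st: "strategy \<sigma>" and oc: "\<And>W. tournament W \<Longrightarrow> outcome \<sigma> W = \<rho> W"
    using fe unfolding feasible_method_def by blast
  show ?thesis unfolding faithful_def
  proof (intro allI impI)
    fix W :: "'a rel" and R assume W: "tournament W" and R: "ranking R \<and> R \<noteq> \<rho> W"
    have rW: "ranking (\<rho> W)" using rm W unfolding ranking_method_def by blast
    have "cover (\<rho> W) \<subseteq> W" using outcome_cover[OF st W] oc[OF W] by simp
    then show "\<not> more_aligned W R (\<rho> W)" using cover_faithW[OF rW] R by blast
  qed
qed

lemma first_diff: "f 0 = g 0 \<Longrightarrow> f N \<noteq> g N \<Longrightarrow> \<exists>t<N. f t = g t \<and> f (Suc t) \<noteq> g (Suc t)"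
proof (induction N)
  case 0 then show ?case by simp
next
  case (Suc N)
  then show ?case by (cases "f N = g N") (auto intro: less_SucI)
qed

lemma feas_consistent:
  fixes \<rho> :: "'a::finite rel \<Rightarrow> 'a rel"
  assumes rm: "ranking_method \<rho>" and fe: "feasible_method \<rho>"
  shows "consistent \<rho>"
proof -
  obtain \<sigma> where st: "strategy \<sigma>" and oc: "\<And>W. tournament W \<Longrightarrow> outcome \<sigma> W = \<rho> W"
    using fe unfolding feasible_method_def by blast
  let ?N = "card (UNIV::'a set) ^ 2"
  show ?thesis unfolding consistent_def
  proof (intro allI impI)
    fix W W' :: "'a rel" assume a: "tournament W \<and> tournament W' \<and> \<rho> W \<noteq> \<rho> W'"
    then have W: "tournament W" and W': "tournament W'" and ne: "\<rho> W \<noteq> \<rho> W'" by auto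
    have "hs \<sigma> W ?N \<noteq> hs \<sigma> W' ?N" using ne oc[OF W] oc[OF W'] outcome_hs by metis
    then obtain t where tN: "t < ?N" and eq: "hs \<sigma> W t = hs \<sigma> W' t"
        and neq: "hs \<sigma> W (Suc t) \<noteq> hs \<sigma> W' (Suc t)"
      using first_diff[of "hs \<sigma> W" "hs \<sigma> W'" ?N] by auto
    define h where "h = hs \<sigma> W t"
    have nt: "\<not> total_rel (hist_rel h)"
      using neq eq unfolding h_def by (auto simp: hs_Suc step_def)
    define q where "q = \<sigma> h"
    have un: "unranked (hist_rel h) q" using st nt unfolding q_def by (simp add: strategy_def)
    have fq: "fst q \<noteq> snd q" using un unfolding unranked_def by simp
    have s1: "hs \<sigma> W (Suc t) = h @ [winner_loser W q]" using nt unfolding h_def q_def by (simp add: hs_Suc step_def)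
    have s2: "hs \<sigma> W' (Suc t) = h @ [winner_loser W' q]" using nt eq unfolding h_def q_def by (simp add: hs_Suc step_def)
    have wne: "winner_loser W q \<noteq> winner_loser W' q" using neq s1 s2 by simp
    obtain x y where xy: "winner_loser W q = (x,y)" by (cases "winner_loser W q")
    have wl2: "winner_loser W' q = (y,x)"
      using wne xy wl_cases[of W q] wl_cases[of W' q] by (cases q) auto
    have xyW: "(x,y) \<in> W" using wl_in[OF W fq] xy by simp
    have yxW': "(y,x) \<in> W'" using wl_in[OF W' fq] wl2 by simp
    have wlset: "winner_loser W'' q = (x,y) \<or> winner_loser W'' q = (y,x)" for W''
      using xy wl_cases[of W q] wl_cases[of W'' q] by (cases q) auto
    have hW: "set h \<subseteq> W" using set_hs_sub[OF st W] unfolding h_def .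
    have hW': "set h \<subseteq> W'" using set_hs_sub[OF st W'] eq unfolding h_def by simp
    show "\<exists>x y. (x, y) \<in> W \<and> (y, x) \<in> W' \<and>
        (\<forall>W''. tournament W'' \<and> W \<inter> W' \<subseteq> W'' \<longrightarrow> ((x, y) \<in> \<rho> W'') = ((x, y) \<in> W''))"
    proof (intro exI conjI allI impI)
      show "(x,y) \<in> W" by (rule xyW)
      show "(y,x) \<in> W'" by (rule yxW')
      fix W'' assume b: "tournament W'' \<and> W \<inter> W' \<subseteq> W''"
      then have W'': "tournament W''" and sub: "W \<inter> W' \<subseteq> W''" by auto
      have "set h \<subseteq> W''" using hW hW' sub by blast
      then have hs'': "hs \<sigma> W'' t = h" using play_same[OF W'', of \<sigma> W t] unfolding h_def by simp
      then have "hs \<sigma> W'' (Suc t) = h @ [winner_loser W'' q]" using nt unfolding q_def by (simp add: hs_Suc step_def)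
      then have "winner_loser W'' q \<in> hist_rel (hs \<sigma> W'' (Suc t))" using set_sub_hist by fastforce
      moreover have "Suc t \<le> ?N" using tN by simp
      ultimately have inr: "winner_loser W'' q \<in> \<rho> W''" using outcome_hist_mono[of "Suc t" \<sigma> W''] oc[OF W''] by blast
      have inw: "winner_loser W'' q \<in> W''" using wl_in[OF W'' fq] .
      have rW'': "ranking (\<rho> W'')" using rm W'' unfolding ranking_method_def by blast
      show "((x, y) \<in> \<rho> W'') = ((x, y) \<in> W'')"
        using wlset[of W''] inr inw ranking_asym[OF rW''] tour_asym[OF W''] by metis
    qed
  qed
qed

lemma flip_tournament:
  assumes R: "ranking R" and yx: "(y,x) \<in> R"
  shows "tournament (insert (x,y) (R - {(y,x)}))"
proof -
  let ?W = "insert (x,y) (R - {(y,x)})"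
  have xy: "x \<noteq> y" using yx ranking_irrefl[OF R] by metis
  have "total_rel ?W"
    unfolding total_rel_def
  proof (intro allI impI)
    fix a b :: 'a assume ab: "a \<noteq> b"
    show "(a,b) \<in> ?W \<or> (b,a) \<in> ?W"
    proof (cases "(a,b) = (y,x) \<or> (b,a) = (y,x)")
      case True then show ?thesis by auto
    next
      case False
      have "(a,b) \<in> R \<or> (b,a) \<in> R" using ranking_total[OF R ab] by metis
      then show ?thesis using False by auto
    qed
  qed
  moreover have "asym ?W"
  proof (rule asymI)
    fix a b assume ab: "(a,b) \<in> ?W"
    show "(b,a) \<notin> ?W"
    proof
      assume ba: "(b,a) \<in> ?W"
      show False
      proof (cases "(a,b) = (x,y)")
        case True
        then have "(b,a) = (y,x)" by simp
        then show False using ba xy by auto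
      next
        case False
        then have abR: "(a,b) \<in> R" "(a,b) \<noteq> (y,x)" using ab by auto
        show False
        proof (cases "(b,a) = (x,y)")
          case True then show False using abR by auto
        next
          case False
          then have "(b,a) \<in> R" using ba by auto
          then show False using abR ranking_asym[OF R] by metis
        qed
      qed
    qed
  qed
  ultimately show ?thesis unfolding tournament_def by simp
qed

lemma feas_regret_efficient:
  fixes \<rho> :: "'a::finite rel \<Rightarrow> 'a rel"
  assumes P: "ranking P" and rm: "ranking_method \<rho>" and fe: "feasible_method \<rho>" and rf: "regret_free P \<rho>"
  shows "efficient_method P \<rho>"
proof -
  obtain \<sigma> where st: "strategy \<sigma>" and oc: "\<And>W. tournament W \<Longrightarrow> outcome \<sigma> W = \<rho> W"
    using fe unfolding feasible_method_def by blast
  let ?N = "card (UNIV::'a set) ^ 2"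
  show ?thesis unfolding efficient_method_def W_efficient_def
  proof (intro allI impI)
    fix W :: "'a rel" and x y
    assume W: "tournament W" and xyP: "(x,y) \<in> P" and xyW: "(x,y) \<in> W"
    show "(x,y) \<in> \<rho> W"
    proof (rule ccontr)
      assume nxy: "(x,y) \<notin> \<rho> W"
      define h where "h = hs \<sigma> W ?N"
      define R where "R = \<rho> W"
      have R: "ranking R" using rm W unfolding ranking_method_def R_def by blast
      have Rh: "R = hist_rel h" unfolding R_def h_def using oc[OF W] outcome_hs by metis
      have "x \<noteq> y" using xyW tour_irrefl[OF W] by metis
      then have yxR: "(y,x) \<in> R" using nxy ranking_total[OF R] unfolding R_def by metis
      define W'' where "W'' = insert (x,y) (R - {(y,x)})"
      have W'': "tournament W''"
        unfolding W''_def by (rule flip_tournament[OF R yxR])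
      have hW: "set h \<subseteq> W" using set_hs_sub[OF st W] unfolding h_def .
      have "(y,x) \<notin> set h" using hW xyW tour_asym[OF W] by blast
      moreover have "set h \<subseteq> R" using Rh set_sub_hist by blast
      ultimately have "set h \<subseteq> W''" unfolding W''_def by blast
      then have "hs \<sigma> W'' ?N = h" using play_same[OF W''] unfolding h_def by blast
      then have "\<rho> W'' = R" using oc[OF W''] Rh outcome_hs by metis
      then have un: "W_unimprovable P W'' R" using rf W'' unfolding regret_free_def by metis
      obtain R'' where r1: "ranking R''" and r2: "cover R'' \<subseteq> W''" and r3: "R'' \<noteq> R"
          and r4: "more_aligned P R'' R"
        using improve[OF R P yxR xyP] unfolding W''_def by blast
      have "W_feasible W'' R''" using feasible_from_cover[OF W'' r1 r2] .
      then show False using un r3 r4 unfolding W_unimprovable_def by blast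
    qed
  qed
qed

lemma eff_regret_free:
  fixes \<rho> :: "'a::finite rel \<Rightarrow> 'a rel"
  assumes P: "ranking P" and rm: "ranking_method \<rho>" and fa: "faithful \<rho>" and ef: "efficient_method P \<rho>"
  shows "regret_free P \<rho>"
  unfolding regret_free_def W_unimprovable_def
proof (intro allI impI conjI)
  fix W :: "'a rel" assume W: "tournament W"
  show R: "ranking (\<rho> W)" using rm W unfolding ranking_method_def by blast
  fix R' assume a: "W_feasible W R' \<and> R' \<noteq> \<rho> W"
  then have R': "ranking R'" and ne: "R' \<noteq> \<rho> W" unfolding W_feasible_def by auto
  have cR': "cover R' \<subseteq> W" using feasible_cover a W by blast
  show "\<not> more_aligned P R' (\<rho> W)"
  proof
    assume al: "more_aligned P R' (\<rho> W)"
    have "cover R' \<subseteq> \<rho> W"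
    proof
      fix q assume q: "q \<in> cover R'"
      obtain u v where uv: "q = (u,v)" by (cases q)
      have uvW: "(u,v) \<in> W" and uvR': "(u,v) \<in> R'" using q uv cR' cover_sub by blast+
      show "q \<in> \<rho> W"
      proof (rule ccontr)
        assume nq: "q \<notin> \<rho> W"
        have "u \<noteq> v" using uvW tour_irrefl[OF W] by metis
        then have vu: "(v,u) \<in> \<rho> W" using nq uv ranking_total[OF R] by metis
        show False
        proof (cases "(u,v) \<in> P")
          case True
          then have "(u,v) \<in> \<rho> W" using ef W uvW unfolding efficient_method_def W_efficient_def by blast
          then show False using nq uv by simp
        next
          case False
          then have "(v,u) \<in> P" using ranking_total[OF P] \<open>u \<noteq> v\<close> by metis
          then have "(v,u) \<in> R'" using al vu unfolding more_aligned_def by blast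
          then show False using uvR' ranking_asym[OF R'] by metis
        qed
      qed
    qed
    then have "R' \<subseteq> \<rho> W" using cover_sub_trans[OF R' _ ranking_trans[OF R]] by simp
    then show False using ranking_sub_eq[OF R' R] ne by simp
  qed
qed


lemma flip_tour:
  assumes W: "tournament W" and xy: "(x,y) \<in> W"
  shows "tournament (insert (y,x) (W - {(x,y)}))"
proof -
  let ?W = "insert (y,x) (W - {(x,y)})"
  have xy': "x \<noteq> y" using xy tour_irrefl[OF W] by metis
  have "total_rel ?W"
    unfolding total_rel_def
  proof (intro allI impI)
    fix a b :: 'a assume ab: "a \<noteq> b"
    show "(a,b) \<in> ?W \<or> (b,a) \<in> ?W"
    proof (cases "(a,b) = (x,y) \<or> (b,a) = (x,y)")
      case True then show ?thesis by auto
    next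
      case False
      have "(a,b) \<in> W \<or> (b,a) \<in> W" using tour_total[OF W ab] by metis
      then show ?thesis using False by auto
    qed
  qed
  moreover have "asym ?W"
  proof (rule asymI)
    fix a b assume ab: "(a,b) \<in> ?W"
    show "(b,a) \<notin> ?W"
    proof
      assume ba: "(b,a) \<in> ?W"
      show False
      proof (cases "(a,b) = (y,x)")
        case True
        then have "(b,a) = (x,y)" by simp
        then show False using ba xy' by auto
      next
        case False
        then have abR: "(a,b) \<in> W" "(a,b) \<noteq> (x,y)" using ab by auto
        show False
        proof (cases "(b,a) = (y,x)")
          case True then show False using abR by auto
        next
          case False
          then have "(b,a) \<in> W" using ba by auto
          then show False using abR tour_asym[OF W] by metis
        qed
      qed
    qed
  qed
  ultimately show ?thesis unfolding tournament_def by simp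
qed

definition comp :: "'a rel \<Rightarrow> 'a rel \<Rightarrow> 'a rel" where
  "comp S W = {(u,v). if (u,v) \<in> S \<or> (v,u) \<in> S then (u,v) \<in> W else (v,u) \<in> W}"

lemma comp_mem: "(u,v) \<in> comp S W \<longleftrightarrow> (if (u,v) \<in> S \<or> (v,u) \<in> S then (u,v) \<in> W else (v,u) \<in> W)"
  unfolding comp_def by simp

lemma comp_tour:
  assumes W: "tournament W" shows "tournament (comp S W)"
proof -
  have "total_rel (comp S W)"
    unfolding total_rel_def comp_mem using tour_total[OF W] by metis
  moreover have "asym (comp S W)"
    by (rule asymI) (auto simp: comp_mem split: if_splits dest: tour_asym[OF W])
  ultimately show ?thesis unfolding tournament_def by simp
qed

lemma comp_sub: "S \<subseteq> W \<Longrightarrow> S \<subseteq> comp S W"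
  unfolding comp_def by auto

lemma comp_inter: "tournament W \<Longrightarrow> S \<subseteq> W \<Longrightarrow> W \<inter> comp S W \<subseteq> S"
  unfolding comp_def by (auto split: if_splits dest: tour_asym)

lemma nonconst:
  fixes \<rho> :: "'a rel \<Rightarrow> 'a rel"
  assumes rm: "ranking_method \<rho>" and co: "consistent \<rho>"
    and W1: "tournament W1" "S \<subseteq> W1" and W2: "tournament W2" "S \<subseteq> W2" and ne: "\<rho> W1 \<noteq> \<rho> W2"
  shows "\<exists>W. tournament W \<and> S \<subseteq> W \<and> \<rho> W \<noteq> \<rho> (comp S W)"
proof (rule ccontr)
  assume nc: "\<not> ?thesis"
  have eqc: "\<rho> (comp S W) = \<rho> W" if "tournament W" "S \<subseteq> W" for W using nc that by metis
  obtain x y where xy1: "(x,y) \<in> W1" and yx2: "(y,x) \<in> W2"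
      and phi: "\<And>W''. tournament W'' \<Longrightarrow> W1 \<inter> W2 \<subseteq> W'' \<Longrightarrow> ((x,y) \<in> \<rho> W'' \<longleftrightarrow> (x,y) \<in> W'')"
    using co W1(1) W2(1) ne unfolding consistent_def by metis
  define W3 where "W3 = insert (y,x) (W1 - {(x,y)})"
  have W3: "tournament W3" unfolding W3_def using flip_tour[OF W1(1) xy1] .
  have xy2: "(x,y) \<notin> W2" using yx2 tour_asym[OF W2(1)] by metis
  have yx1: "(y,x) \<notin> W1" using xy1 tour_asym[OF W1(1)] by metis
  have xyS: "(x,y) \<notin> S" using xy2 W2(2) by blast
  have yxS: "(y,x) \<notin> S" using yx1 W1(2) by blast
  have S3: "S \<subseteq> W3" using W1(2) xyS unfolding W3_def by blast
  have I3: "W1 \<inter> W2 \<subseteq> W3" using xy2 unfolding W3_def by blast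
  have xne: "x \<noteq> y" using xy1 tour_irrefl[OF W1(1)] by metis
  have r1: "(x,y) \<in> \<rho> W1" using phi[OF W1(1)] xy1 by blast
  have "(x,y) \<notin> W3" unfolding W3_def using xne by simp
  then have r3: "(x,y) \<notin> \<rho> W3" using phi[OF W3 I3] by simp
  let ?C1 = "comp S W1" and ?C3 = "comp S W3"
  have C1: "tournament ?C1" using comp_tour[OF W1(1)] .
  have C3: "tournament ?C3" using comp_tour[OF W3] .
  have e1: "\<rho> ?C1 = \<rho> W1" using eqc[OF W1] .
  have e3: "\<rho> ?C3 = \<rho> W3" using eqc[OF W3 S3] .
  have "\<rho> ?C1 \<noteq> \<rho> ?C3" using r1 r3 e1 e3 by auto
  then obtain a b where ab1: "(a,b) \<in> ?C1" and ba3: "(b,a) \<in> ?C3"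
      and phi2: "\<And>W''. tournament W'' \<Longrightarrow> ?C1 \<inter> ?C3 \<subseteq> W'' \<Longrightarrow> ((a,b) \<in> \<rho> W'' \<longleftrightarrow> (a,b) \<in> W'')"
    using co C1 C3 unfolding consistent_def by metis
  have ab3: "(a,b) \<notin> ?C3" using ba3 tour_asym[OF C3] by metis
  have agree: "(u,v) \<in> ?C1 \<longleftrightarrow> (u,v) \<in> ?C3" if "(u,v) \<noteq> (x,y)" "(u,v) \<noteq> (y,x)" for u v
    using that unfolding comp_mem W3_def by auto
  have "(a,b) = (x,y) \<or> (a,b) = (y,x)" using agree ab1 ab3 by metis
  moreover have "(x,y) \<notin> ?C1" using xyS yxS yx1 unfolding comp_mem by simp
  ultimately have abyx: "(a,b) = (y,x)" using ab1 by metis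
  have "(a,b) \<in> \<rho> ?C1" using phi2[OF C1] ab1 by blast
  then have "(y,x) \<in> \<rho> W1" using abyx e1 by simp
  moreover have "ranking (\<rho> W1)" using rm W1(1) unfolding ranking_method_def by blast
  ultimately show False using r1 ranking_asym by metis
qed

lemma consistentD:
  assumes "consistent \<rho>" "tournament W" "tournament W'" "\<rho> W \<noteq> \<rho> W'"
  shows "\<exists>x y. (x, y) \<in> W \<and> (y, x) \<in> W' \<and>
        (\<forall>W''. tournament W'' \<and> W \<inter> W' \<subseteq> W'' \<longrightarrow> ((x, y) \<in> \<rho> W'' \<longleftrightarrow> (x, y) \<in> W''))"
  using assms unfolding consistent_def by blast

lemma faithful_cover:
  fixes \<rho> :: "'a::finite rel \<Rightarrow> 'a rel"
  assumes rm: "ranking_method \<rho>" and fa: "faithful \<rho>" and W: "tournament W"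
  shows "cover (\<rho> W) \<subseteq> W"
proof (rule faithW_cover)
  show "ranking (\<rho> W)" using rm W unfolding ranking_method_def by simp
  show "tournament W" by (rule W)
  fix R' assume "ranking R'" "R' \<noteq> \<rho> W"
  then show "\<not> more_aligned W R' (\<rho> W)" using fa W unfolding faithful_def by simp
qed

lemma good_exists:
  fixes \<rho> :: "'a::finite rel \<Rightarrow> 'a rel"
  assumes rm: "ranking_method \<rho>" and fa: "faithful \<rho>" and co: "consistent \<rho>"
    and W: "tournament W" "S \<subseteq> W" and trH: "trans H"
    and hyp: "\<And>W''. tournament W'' \<Longrightarrow> S \<subseteq> W'' \<Longrightarrow> H \<subseteq> \<rho> W''"
    and nt: "\<not> total_rel H"
  shows "\<exists>p. unranked H p \<and> (\<forall>W''. tournament W'' \<and> S \<subseteq> W'' \<longrightarrow> (p \<in> \<rho> W'' \<longleftrightarrow> p \<in> W''))"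
proof (cases "\<forall>W''. tournament W'' \<and> S \<subseteq> W'' \<longrightarrow> \<rho> W'' = \<rho> W")
  case True
  have rW: "ranking (\<rho> W)" using rm W unfolding ranking_method_def by simp
  obtain p where p: "p \<in> cover (\<rho> W)" "unranked H p"
    using exists_cover_unranked[OF rW hyp[OF W] trH nt] by auto
  have "p \<in> \<rho> W'' \<and> p \<in> W''" if "tournament W''" "S \<subseteq> W''" for W''
  proof -
    have e: "\<rho> W'' = \<rho> W" using True that by simp
    have "cover (\<rho> W'') \<subseteq> W''" using faithful_cover[OF rm fa that(1)] .
    then have "p \<in> W''" using p(1) e by auto
    moreover have "p \<in> \<rho> W''" using p(1) e cover_sub by auto
    ultimately show ?thesis by simp
  qed
  then have "\<forall>W''. tournament W'' \<and> S \<subseteq> W'' \<longrightarrow> (p \<in> \<rho> W'' \<longleftrightarrow> p \<in> W'')" by auto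
  then show ?thesis using p(2) by (intro exI[of _ p]) simp
next
  case False
  then obtain W1 where W1: "tournament W1" "S \<subseteq> W1" "\<rho> W1 \<noteq> \<rho> W" by auto
  obtain W' where W': "tournament W'" "S \<subseteq> W'" and ne: "\<rho> W' \<noteq> \<rho> (comp S W')"
    using nonconst[OF rm co W1(1,2) W W1(3)] by auto
  have C: "tournament (comp S W')" using comp_tour[OF W'(1)] .
  have CS: "S \<subseteq> comp S W'" using comp_sub[OF W'(2)] .
  obtain x y where xy: "(x,y) \<in> W'" and yx: "(y,x) \<in> comp S W'"
      and phi: "\<forall>W''. tournament W'' \<and> W' \<inter> comp S W' \<subseteq> W'' \<longrightarrow> ((x,y) \<in> \<rho> W'' \<longleftrightarrow> (x,y) \<in> W'')"
    using consistentD[OF co W'(1) C ne] by auto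
  have CI: "W' \<inter> comp S W' \<subseteq> S" using comp_inter[OF W'] .
  have phiS: "(x,y) \<in> \<rho> W'' \<longleftrightarrow> (x,y) \<in> W''" if "tournament W''" "S \<subseteq> W''" for W''
  proof -
    have "W' \<inter> comp S W' \<subseteq> W''" using CI that(2) by (rule order_trans)
    then show ?thesis using phi that(1) by simp
  qed
  have xne: "x \<noteq> y" using xy tour_irrefl[OF W'(1)] by metis
  have n1: "(x,y) \<notin> H"
  proof
    assume "(x,y) \<in> H"
    then have "(x,y) \<in> \<rho> (comp S W')" using hyp[OF C CS] by auto
    then have "(x,y) \<in> comp S W'" using phiS[OF C CS] by simp
    then show False using yx tour_asym[OF C] by metis
  qed
  have n2: "(y,x) \<notin> H"
  proof
    assume "(y,x) \<in> H"
    then have a1: "(y,x) \<in> \<rho> W'" using hyp[OF W'] by auto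
    have a2: "(x,y) \<in> \<rho> W'" using phiS[OF W'] xy by simp
    have "ranking (\<rho> W')" using rm W'(1) unfolding ranking_method_def by simp
    then show False using a1 a2 ranking_asym by metis
  qed
  have u: "unranked H (x,y)" using xne n1 n2 unfolding unranked_def by simp
  have "\<forall>W''. tournament W'' \<and> S \<subseteq> W'' \<longrightarrow> ((x,y) \<in> \<rho> W'' \<longleftrightarrow> (x,y) \<in> W'')"
    using phiS by simp
  then show ?thesis using u by (intro exI[of _ "(x,y)"]) simp
qed

lemma construct_feasible:
  fixes \<rho> :: "'a::finite rel \<Rightarrow> 'a rel"
  assumes rm: "ranking_method \<rho>" and fa: "faithful \<rho>" and co: "consistent \<rho>"
  shows "feasible_method \<rho>"
proof -
  define good :: "('a \<times> 'a) list \<Rightarrow> 'a \<times> 'a \<Rightarrow> bool" where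
    "good h p \<longleftrightarrow> unranked (hist_rel h) p \<and>
        (\<forall>W''. tournament W'' \<and> set h \<subseteq> W'' \<longrightarrow> (p \<in> \<rho> W'' \<longleftrightarrow> p \<in> W''))" for h p
  define \<sigma> :: "('a \<times> 'a) list \<Rightarrow> 'a \<times> 'a" where
    "\<sigma> = (\<lambda>h. if \<exists>p. good h p then SOME p. good h p else SOME p. unranked (hist_rel h) p)"
  have sg: "good h (\<sigma> h)" if "\<exists>p. good h p" for h
    using that unfolding \<sigma>_def by (simp add: someI_ex)
  have st: "strategy \<sigma>"
    unfolding strategy_def
  proof (intro allI impI)
    fix h :: "('a \<times> 'a) list" assume nt: "\<not> total_rel (hist_rel h)"
    show "unranked (hist_rel h) (\<sigma> h)"
    proof (cases "\<exists>p. good h p")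
      case True
      then have "good h (\<sigma> h)" by (rule sg)
      then show ?thesis unfolding good_def by simp
    next
      case False
      then have "\<sigma> h = (SOME p. unranked (hist_rel h) p)" unfolding \<sigma>_def by simp
      then show ?thesis using exists_unranked[OF nt] by (metis someI_ex)
    qed
  qed
  have inv: "\<forall>W. tournament W \<longrightarrow> hist_rel (hs \<sigma> W t) \<subseteq> \<rho> W" for t
  proof (induction t)
    case 0 then show ?case by (simp add: hist_rel_def)
  next
    case (Suc t)
    show ?case
    proof (intro allI impI)
      fix W :: "'a rel" assume W: "tournament W"
      let ?h = "hs \<sigma> W t"
      have rW: "ranking (\<rho> W)" using rm W unfolding ranking_method_def by blast
      show "hist_rel (hs \<sigma> W (Suc t)) \<subseteq> \<rho> W"
      proof (cases "total_rel (hist_rel ?h)")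
        case True then show ?thesis using Suc W by (simp add: hs_Suc step_def)
      next
        case False
        have hW: "set ?h \<subseteq> W" using set_hs_sub[OF st W] .
        have hyp: "hist_rel ?h \<subseteq> \<rho> W''" if "tournament W''" "set ?h \<subseteq> W''" for W''
        proof -
          have "hs \<sigma> W'' t = ?h" using play_same[OF that(1) that(2)] .
          moreover have "hist_rel (hs \<sigma> W'' t) \<subseteq> \<rho> W''" using Suc that(1) by simp
          ultimately show ?thesis by simp
        qed
        have "\<exists>p. good ?h p"
          using good_exists[OF rm fa co W hW trans_hist hyp False] unfolding good_def by simp
        then have g: "good ?h (\<sigma> ?h)" by (rule sg)
        let ?q = "winner_loser W (\<sigma> ?h)"
        have fq: "fst (\<sigma> ?h) \<noteq> snd (\<sigma> ?h)" using g unfolding good_def unranked_def by simp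
        have eqv: "\<sigma> ?h \<in> \<rho> W \<longleftrightarrow> \<sigma> ?h \<in> W" using g W hW unfolding good_def by simp
        have qR: "?q \<in> \<rho> W"
        proof (cases "\<sigma> ?h \<in> W")
          case True then show ?thesis using eqv by (simp add: winner_loser_def)
        next
          case False
          then have "\<sigma> ?h \<notin> \<rho> W" using eqv by simp
          then have "(snd (\<sigma> ?h), fst (\<sigma> ?h)) \<in> \<rho> W"
            using ranking_total[OF rW, of "snd (\<sigma> ?h)" "fst (\<sigma> ?h)"] fq by (cases "\<sigma> ?h") auto
          then show ?thesis using False by (simp add: winner_loser_def)
        qed
        have "hist_rel ?h \<subseteq> \<rho> W" using Suc W by simp
        then have "set ?h \<subseteq> \<rho> W" using set_sub_hist[of ?h] by (rule order_trans[rotated])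
        then have "insert ?q (set ?h) \<subseteq> \<rho> W" using qR by simp
        then have "(insert ?q (set ?h))\<^sup>+ \<subseteq> (\<rho> W)\<^sup>+" by (rule trancl_mono_subset)
        then have "(insert ?q (set ?h))\<^sup>+ \<subseteq> \<rho> W" using trancl_id[OF ranking_trans[OF rW]] by simp
        then show ?thesis using False by (simp add: hs_Suc step_def hist_rel_snoc)
      qed
    qed
  qed
  have "outcome \<sigma> W = \<rho> W" if W: "tournament W" for W
  proof -
    have rW: "ranking (\<rho> W)" using rm W unfolding ranking_method_def by blast
    have "outcome \<sigma> W \<subseteq> \<rho> W" using inv W unfolding outcome_hs by simp
    then show ?thesis using total_sub_eq[OF outcome_total[OF st] _ rW] by simp
  qed
  then show ?thesis unfolding feasible_method_def using st by blast
qed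

theorem corollary4:
  fixes P :: "('a::finite) rel" and \<rho> :: "'a rel \<Rightarrow> 'a rel"
  assumes "ranking P" and "ranking_method \<rho>"
  shows "(feasible_method \<rho> \<and> regret_free P \<rho>) \<longleftrightarrow>
         (faithful \<rho> \<and> consistent \<rho> \<and> efficient_method P \<rho>)"
  using feas_faithful[OF assms(2)] feas_consistent[OF assms(2)] feas_regret_efficient[OF assms]
    construct_feasible[OF assms(2)] eff_regret_free[OF assms]
  by blast

end
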